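(* Let $M_t, L, K$ be positive integers, let $1\le L'\le L$, let $\mathbf h_1,\dots,\mathbf h_L\in\mathbb C^{M_t}$, let $n_1,\dots,n_L$ be pairwise distinct nonnegative integers, let $\sigma>0$, and let $n'_{\rm span}$ be an integer with $0\le n'_{\rm span}<n_{\rm span}$. With $\kappa_{l'}$, $\bar{\mathbf H}_{l'}^{\perp}$, $\mathbf g_k$ and $\mathbf V_k$ defined as in the context, for every $k\in\{0,1,\dots,K-1\}$ we have $\mathbf g_k=\mathbf V_k\mathbf e_k$, where $$\mathbf e_k=\frac{1}{\sigma}\sum_{l=1}^{L}\mathbf h_l\, e^{j\frac{2\pi}{K}k\,(n_l-n_{\max}+n'_{\rm span})}\in\mathbb C^{M_t}.$$
   Context: Here $j$ is the imaginary unit and $(\cdot)^H$ denotes conjugate transpose. Set $n_{\max}=\max_{1\le l\le L}n_l$ and $n_{\rm span}=n_{\max}-\min_{1\le l\le L}n_l$. For $l'=1,\dots,L'$ define the delay pre-compensation $\kappa_{l'}=n_{\max}-n_{L-L'+l'}$. For each $l'$ define the index sets $\mathcal L_{l'}=\{1\le l\le L:\ n_l+\kappa_{l'}\notin[n_{\max}-n'_{\rm span},\,n_{\max}]\}$ and $\bar{\mathcal L}_{l'}=\{1,\dots,L\}\setminus\mathcal L_{l'}$. Let $\bar{\mathbf H}_{l'}\in\mathbb C^{M_t\times|\mathcal L_{l'}|}$ be the matrix whose columns are the $\mathbf h_l$ with $l\in\mathcal L_{l'}$, and let $\bar{\mathbf H}_{l'}^{\perp}\in\mathbb C^{M_t\times\bar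 r_{l'}}$ be a matrix whose columns form an orthonormal basis of the orthogonal complement (in $\mathbb C^{M_t}$) of the column space of $\bar{\mathbf H}_{l'}$ (if $\mathcal L_{l'}=\emptyset$ this complement is all of $\mathbb C^{M_t}$). For $t\in\{0,1,\dots,n'_{\rm span}\}$ define $\mathbf g_{l'}[t]=\mathbf h_l$ if there exists $l\in\bar{\mathcal L}_{l'}$ with $n_l+\kappa_{l'}=t+n_{\max}-n'_{\rm span}$ (such $l$ is unique since the delays are distinct), and $\mathbf g_{l'}[t]=\mathbf 0$ otherwise. For $k\in\{0,\dots,K-1\}$ define $\mathbf g_{kl'}=\frac1\sigma\sum_{t=0}^{n'_{\rm span}}\mathbf g_{l'}[t]e^{j\frac{2\pi}{K}kt}\in\mathbb C^{M_t}$, let $R=\sum_{l'=1}^{L'}\bar r_{l'}$, define the stacked vector $\mathbf g_k=\big[\mathbf g_{k1}^H\bar{\mathbf H}_1^{\perp},\dots,\mathbf g_{kL'}^H\bar{\mathbf H}_{L'}^{\perp}\big]^H\in\mathbb C^{R}$, and define $\mathbf V_k=\big[\bar{\mathbf H}_1^{\perp}e^{-j\frac{2\pi}{K}k\kappa_1},\dots,\bar{\mathbf H}_{L'}^{\perp}e^{-j\frac{2\pi}{K}k\kappa_{L'}}\big]^H\in\mathbb C^{R\times M_t}$. *)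

theory Defs
  imports "Jordan_Normal_Form.Schur_Decomposition"
begin

(* Vectors in C^m are Jordan_Normal_Form vectors in carrier_vec m; matrices are complex mat.
   (.)^H is mat_adjoint (conjugate transpose). *)

definition colspace :: "complex mat \<Rightarrow> complex vec set" where
  "colspace A = {A *\<^sub>v c | c. c \<in> carrier_vec (dim_col A)}"

definition orth_compl :: "nat \<Rightarrow> complex vec set \<Rightarrow> complex vec set" where
  "orth_compl m S = {v \<in> carrier_vec m. \<forall>w\<in>S. v \<bullet>c w = 0}"

definition onb_matrix :: "nat \<Rightarrow> complex mat \<Rightarrow> complex vec set \<Rightarrow> bool" where
  "onb_matrix m P S \<longleftrightarrow> P \<in> carrier_mat m (dim_col P) \<and>
     mat_adjoint P * P = 1\<^sub>m (dim_col P) \<and> colspace P = S"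

definition hcat :: "nat \<Rightarrow> complex mat list \<Rightarrow> complex mat" where
  "hcat m As = mat_of_cols m (concat (map cols As))"

definition n_max :: "nat \<Rightarrow> (nat \<Rightarrow> nat) \<Rightarrow> int" where
  "n_max L n = int (Max (n ` {1..L}))"

definition n_span :: "nat \<Rightarrow> (nat \<Rightarrow> nat) \<Rightarrow> int" where
  "n_span L n = n_max L n - int (Min (n ` {1..L}))"

definition kappa :: "nat \<Rightarrow> nat \<Rightarrow> (nat \<Rightarrow> nat) \<Rightarrow> nat \<Rightarrow> int" where
  "kappa L L' n l' = n_max L n - int (n (L - L' + l'))"

(* \<L>_{l'} ; ns stands for n'_span *)
definition Lset :: "nat \<Rightarrow> nat \<Rightarrow> (nat \<Rightarrow> nat) \<Rightarrow> int \<Rightarrow> nat \<Rightarrow> nat set" where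
  "Lset L L' n ns l' = {l \<in> {1..L}. int (n l) + kappa L L' n l' \<notin> {n_max L n - ns .. n_max L n}}"

definition Lbar :: "nat \<Rightarrow> nat \<Rightarrow> (nat \<Rightarrow> nat) \<Rightarrow> int \<Rightarrow> nat \<Rightarrow> nat set" where
  "Lbar L L' n ns l' = {1..L} - Lset L L' n ns l'"

definition Hbar :: "nat \<Rightarrow> (nat \<Rightarrow> complex vec) \<Rightarrow> nat \<Rightarrow> nat \<Rightarrow> (nat \<Rightarrow> nat) \<Rightarrow> int \<Rightarrow> nat \<Rightarrow> complex mat" where
  "Hbar Mt h L L' n ns l' = mat_of_cols Mt (map h (sorted_list_of_set (Lset L L' n ns l')))"

definition gtap :: "nat \<Rightarrow> (nat \<Rightarrow> complex vec) \<Rightarrow> nat \<Rightarrow> nat \<Rightarrow> (nat \<Rightarrow> nat) \<Rightarrow> int \<Rightarrow> nat \<Rightarrow> int \<Rightarrow> complex vec" where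
  "gtap Mt h L L' n ns l' t =
     (if \<exists>l\<in>Lbar L L' n ns l'. int (n l) + kappa L L' n l' = t + n_max L n - ns
      then h (THE l. l \<in> Lbar L L' n ns l' \<and> int (n l) + kappa L L' n l' = t + n_max L n - ns)
      else 0\<^sub>v Mt)"

definition gkl :: "nat \<Rightarrow> (nat \<Rightarrow> complex vec) \<Rightarrow> nat \<Rightarrow> nat \<Rightarrow> (nat \<Rightarrow> nat) \<Rightarrow> real \<Rightarrow> int \<Rightarrow> nat \<Rightarrow> nat \<Rightarrow> nat \<Rightarrow> complex vec" where
  "gkl Mt h L L' n \<sigma> ns K k l' = vec Mt (\<lambda>i. (1 / complex_of_real \<sigma>) *
     (\<Sum>t\<in>{0..ns}. gtap Mt h L L' n ns l' t $ i * exp (\<i> * of_real (2 * pi / real K) * of_nat k * of_int t)))"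

(* g_k = [g_{k1}^H H1perp, ..., g_{kL'}^H HL'perp]^H, Hp l' is the matrix \<bar>H\<bar>_{l'}^\<perp> *)
definition gk :: "nat \<Rightarrow> (nat \<Rightarrow> complex vec) \<Rightarrow> nat \<Rightarrow> nat \<Rightarrow> (nat \<Rightarrow> nat) \<Rightarrow> real \<Rightarrow> int \<Rightarrow> nat \<Rightarrow> (nat \<Rightarrow> complex mat) \<Rightarrow> nat \<Rightarrow> complex vec" where
  "gk Mt h L L' n \<sigma> ns K Hp k = col (mat_adjoint (hcat 1
     (map (\<lambda>l'. mat_adjoint (mat_of_cols Mt [gkl Mt h L L' n \<sigma> ns K k l']) * Hp l') [1..<L'+1]))) 0"

definition Vk :: "nat \<Rightarrow> nat \<Rightarrow> nat \<Rightarrow> (nat \<Rightarrow> nat) \<Rightarrow> nat \<Rightarrow> (nat \<Rightarrow> complex mat) \<Rightarrow> nat \<Rightarrow> complex mat" where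
  "Vk Mt L L' n K Hp k = mat_adjoint (hcat Mt
     (map (\<lambda>l'. exp (- \<i> * of_real (2 * pi / real K) * of_nat k * of_int (kappa L L' n l')) \<cdot>\<^sub>m Hp l') [1..<L'+1]))"

definition ek :: "nat \<Rightarrow> (nat \<Rightarrow> complex vec) \<Rightarrow> nat \<Rightarrow> (nat \<Rightarrow> nat) \<Rightarrow> real \<Rightarrow> int \<Rightarrow> nat \<Rightarrow> nat \<Rightarrow> complex vec" where
  "ek Mt h L n \<sigma> ns K k = vec Mt (\<lambda>i. (1 / complex_of_real \<sigma>) *
     (\<Sum>l=1..L. h l $ i * exp (\<i> * of_real (2 * pi / real K) * of_nat k * of_int (int (n l) - n_max L n + ns))))"

end

theory Submission imports Defs begin

lemma cols_mult_map:
  assumes "A \<in> carrier_mat nr n" "B \<in> carrier_mat n nc"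
  shows "cols (A * B) = map (\<lambda>b. A *\<^sub>v b) (cols B)"
  using assms by (intro nth_equalityI) auto

lemma adj_hcat_mult:
  fixes e :: "complex vec"
  assumes Bs: "\<And>B. B \<in> set Bs \<Longrightarrow> B \<in> carrier_mat m (dim_col B)" and e: "e \<in> carrier_vec m"
  shows "mat_adjoint (hcat m Bs) *\<^sub>v e =
    col (mat_adjoint (hcat 1 (map (\<lambda>B. mat_adjoint (mat_of_cols m [e]) * B) Bs))) 0"
proof -
  define cs where "cs = concat (map cols Bs)"
  have cs: "set cs \<subseteq> carrier_vec m" unfolding cs_def using Bs by (auto simp: cols_def)
  define E where "E = mat_adjoint (mat_of_cols m [e])"
  have E: "E \<in> carrier_mat 1 m" unfolding E_def mat_adjoint_def using e by auto
  have "concat (map cols (map (\<lambda>B. E * B) Bs)) = map (\<lambda>b. E *\<^sub>v b) cs"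
    unfolding cs_def map_concat map_map o_def
    by (intro arg_cong[where f=concat] map_cong refl, subst cols_mult_map[OF E Bs], auto)
  then have R: "hcat 1 (map (\<lambda>B. E * B) Bs) = mat_of_cols 1 (map (\<lambda>b. E *\<^sub>v b) cs)"
    unfolding hcat_def by simp
  have L: "hcat m Bs = mat_of_cols m cs" unfolding hcat_def cs_def ..
  have Ee: "\<And>b. b \<in> carrier_vec m \<Longrightarrow> (E *\<^sub>v b) $ 0 = conjugate e \<bullet> b"
    unfolding E_def mat_adjoint_def using e by (auto simp: mult_mat_vec_def mat_of_rows_row)
  show ?thesis unfolding E_def[symmetric] R L
  proof (rule eq_vecI)
    show "dim_vec (mat_adjoint (mat_of_cols m cs) *\<^sub>v e) =
      dim_vec (col (mat_adjoint (mat_of_cols 1 (map (\<lambda>b. E *\<^sub>v b) cs))) 0)"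
      unfolding mat_adjoint_def using cs E by (auto simp: cols_mat_of_cols)
    fix i assume i: "i < dim_vec (col (mat_adjoint (mat_of_cols 1 (map (\<lambda>b. E *\<^sub>v b) cs))) 0)"
    then have i: "i < length cs" unfolding mat_adjoint_def using cs E by auto
    have ci: "cs ! i \<in> carrier_vec m" using cs i by auto
    have "(mat_adjoint (mat_of_cols m cs) *\<^sub>v e) $ i = conjugate (cs ! i) \<bullet> e"
    proof -
      have "mat_adjoint (mat_of_cols m cs) = mat_of_rows m (map conjugate cs)"
        unfolding mat_adjoint_def using cs by simp
      moreover have "row (mat_of_rows m (map conjugate cs)) i = conjugate (cs ! i)"
        using i ci by (subst mat_of_rows_row) auto
      ultimately show ?thesis using i by simp
    qed
    also have "\<dots> = conjugate (conjugate e \<bullet> cs ! i)"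
      using ci e by (metis conjugate_conjugate_sprod conjugate_vec_sprod_comm)
    also have "\<dots> = col (mat_adjoint (mat_of_cols 1 (map (\<lambda>b. E *\<^sub>v b) cs))) 0 $ i"
      unfolding mat_adjoint_def using cs E i ci Ee[OF ci]
      by (auto simp: cols_mat_of_cols col_def mat_of_rows_index mat_of_cols_index)
    finally show "(mat_adjoint (mat_of_cols m cs) *\<^sub>v e) $ i = col (mat_adjoint (mat_of_cols 1 (map (\<lambda>b. E *\<^sub>v b) cs))) 0 $ i" .
  qed
qed

lemma col_in_colspace:
  assumes "j < dim_col A" shows "col A j \<in> colspace A"
proof -
  have "A *\<^sub>v unit_vec (dim_col A) j = col A j"
    using assms by (intro eq_vecI) (auto simp: row_def col_def)
  then show ?thesis unfolding colspace_def by (metis (mono_tags, lifting) mem_Collect_eq unit_vec_carrier)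
qed

lemma gtap_sum:
  fixes X :: "int \<Rightarrow> complex"
  assumes inj: "inj_on n {1..L}" and i: "i < Mt"
  shows "(\<Sum>t\<in>{0..ns}. gtap Mt h L L' n ns l' t $ i * X t) =
    (\<Sum>l\<in>Lbar L L' n ns l'. h l $ i * X (int (n l) + kappa L L' n l' - n_max L n + ns))"
proof -
  define Lb where "Lb = Lbar L L' n ns l'"
  define \<phi> where "\<phi> l = int (n l) + kappa L L' n l' - n_max L n + ns" for l
  have Lb_sub: "Lb \<subseteq> {1..L}" unfolding Lb_def Lbar_def by auto
  have fin: "finite Lb" using Lb_sub finite_subset by blast
  have injphi: "inj_on \<phi> Lb"
    using inj Lb_sub unfolding \<phi>_def inj_on_def by auto
  have range: "\<phi> ` Lb \<subseteq> {0..ns}"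
    unfolding \<phi>_def Lb_def Lbar_def Lset_def by auto
  have gt: "gtap Mt h L L' n ns l' (\<phi> l) = h l" if l: "l \<in> Lb" for l
  proof -
    have ex: "\<exists>l0\<in>Lbar L L' n ns l'. int (n l0) + kappa L L' n l' = \<phi> l + n_max L n - ns"
      using l unfolding Lb_def \<phi>_def by auto
    have "(THE l0. l0 \<in> Lbar L L' n ns l' \<and> int (n l0) + kappa L L' n l' = \<phi> l + n_max L n - ns) = l"
    proof (rule the_equality)
      show "l \<in> Lbar L L' n ns l' \<and> int (n l) + kappa L L' n l' = \<phi> l + n_max L n - ns"
        using l unfolding Lb_def \<phi>_def by auto
      fix l0 assume "l0 \<in> Lbar L L' n ns l' \<and> int (n l0) + kappa L L' n l' = \<phi> l + n_max L n - ns"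
      then have l0: "l0 \<in> Lb" and "int (n l0) = int (n l)" unfolding Lb_def \<phi>_def by auto
      then have "n l0 = n l" by simp
      moreover have "l0 \<in> {1..L}" "l \<in> {1..L}" using l0 l Lb_sub by auto
      ultimately show "l0 = l" using inj unfolding inj_on_def by blast
    qed
    then show ?thesis using ex unfolding gtap_def by simp
  qed
  have gz: "gtap Mt h L L' n ns l' t = 0\<^sub>v Mt" if "t \<notin> \<phi> ` Lb" for t
  proof -
    have "\<not> (\<exists>l0\<in>Lbar L L' n ns l'. int (n l0) + kappa L L' n l' = t + n_max L n - ns)"
    proof
      assume "\<exists>l0\<in>Lbar L L' n ns l'. int (n l0) + kappa L L' n l' = t + n_max L n - ns"
      then obtain l0 where "l0 \<in> Lb" "t = \<phi> l0" unfolding Lb_def \<phi>_def by force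
      then show False using that by auto
    qed
    then show ?thesis unfolding gtap_def by simp
  qed
  have "(\<Sum>t\<in>{0..ns}. gtap Mt h L L' n ns l' t $ i * X t) = (\<Sum>t\<in>\<phi> ` Lb. gtap Mt h L L' n ns l' t $ i * X t)"
    by (rule sum.mono_neutral_right) (use range gz i in auto)
  also have "\<dots> = (\<Sum>l\<in>Lb. gtap Mt h L L' n ns l' (\<phi> l) $ i * X (\<phi> l))"
    by (rule sum.reindex[OF injphi, unfolded o_def])
  also have "\<dots> = (\<Sum>l\<in>Lb. h l $ i * X (\<phi> l))" using gt by simp
  finally show ?thesis unfolding Lb_def \<phi>_def .
qed


lemma orth_sum_zero:
  fixes v :: "nat \<Rightarrow> nat \<Rightarrow> complex" and Z :: "nat \<Rightarrow> complex"
  assumes "finite S" "\<And>l. l \<in> S \<Longrightarrow> (\<Sum>i\<in>I. cnj (v l i) * p i) = 0"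
  shows "(\<Sum>i\<in>I. cnj (a * (\<Sum>l\<in>S. v l i * Z l)) * p i) = 0"
proof -
  have "(\<Sum>i\<in>I. cnj (a * (\<Sum>l\<in>S. v l i * Z l)) * p i) =
        (\<Sum>i\<in>I. \<Sum>l\<in>S. cnj a * cnj (Z l) * (cnj (v l i) * p i))"
    by (simp add: cnj_sum sum_distrib_left sum_distrib_right algebra_simps)
  also have "\<dots> = (\<Sum>l\<in>S. cnj a * cnj (Z l) * (\<Sum>i\<in>I. cnj (v l i) * p i))"
    by (subst sum.swap) (simp add: sum_distrib_left)
  also have "\<dots> = 0" using assms by simp
  finally show ?thesis .
qed

lemma exp_combine:
  fixes r :: real and k :: nat and a b :: int
  shows "exp (\<i> * of_real r * of_nat k * of_int a) * exp (\<i> * of_real r * of_nat k * of_int b)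
       = exp (\<i> * of_real r * of_nat k * of_int (a + b))"
  by (simp add: exp_add[symmetric] algebra_simps)

lemma cnj_exp_neg:
  fixes r :: real and k :: nat and a :: int
  shows "cnj (exp (- \<i> * of_real r * of_nat k * of_int a)) = exp (\<i> * of_real r * of_nat k * of_int a)"
proof -
  have 1: "- \<i> * of_real r * of_nat k * of_int a = \<i> * complex_of_real (- (r * k * a))" by simp
  have 2: "\<i> * of_real r * of_nat k * of_int a = \<i> * complex_of_real (r * k * a)" by simp
  show ?thesis unfolding 1 2 cis_conv_exp[symmetric] cis_cnj by simp
qed


lemma adj_single:
  assumes "v \<in> carrier_vec m"
  shows "mat_adjoint (mat_of_cols m [v]) = mat_of_rows m [conjugate v]"
  unfolding mat_adjoint_def using assms by simp

lemma key_scalar: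
  fixes p :: "complex vec"
  assumes hc: "\<And>l. l \<in> {1..L} \<Longrightarrow> h l \<in> carrier_vec Mt" and inj: "inj_on n {1..L}"
    and p: "p \<in> orth_compl Mt (colspace (Hbar Mt h L L' n ns l'))"
  shows "conjugate (gkl Mt h L L' n \<sigma> ns K k l') \<bullet> p =
    exp (- \<i> * of_real (2 * pi / real K) * of_nat k * of_int (kappa L L' n l')) *
    (conjugate (ek Mt h L n \<sigma> ns K k) \<bullet> p)"
proof -
  define X where "X t = exp (\<i> * of_real (2 * pi / real K) * of_nat k * of_int t)" for t :: int
  define \<phi> where "\<phi> l = int (n l) + kappa L L' n l' - n_max L n + ns" for l
  define Ls where "Ls = Lset L L' n ns l'"
  define Lb where "Lb = Lbar L L' n ns l'"
  define c where "c = exp (- \<i> * of_real (2 * pi / real K) * of_nat k * of_int (kappa L L' n l'))"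
  define g where "g = gkl Mt h L L' n \<sigma> ns K k l'"
  define e where "e = ek Mt h L n \<sigma> ns K k"
  have pc: "p \<in> carrier_vec Mt" using p unfolding orth_compl_def by auto
  have Ls_sub: "Ls \<subseteq> {1..L}" unfolding Ls_def Lset_def by auto
  have finLs: "finite Ls" using Ls_sub finite_subset by blast
  have finLb: "finite Lb" unfolding Lb_def Lbar_def by auto
  have split: "{1..L} = Lb \<union> Ls" "Lb \<inter> Ls = {}"
    unfolding Lb_def Ls_def Lbar_def Lset_def by auto
  have orth: "(\<Sum>i\<in>{0..<Mt}. cnj (h l $ i) * p $ i) = 0" if l: "l \<in> Ls" for l
  proof -
    define xs where "xs = sorted_list_of_set Ls"
    have "l \<in> set xs" using l finLs unfolding xs_def by simp
    then obtain j where j: "j < length xs" "xs ! j = l" by (meson in_set_conv_nth)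
    have hl: "h l \<in> carrier_vec Mt" using hc l Ls_sub by auto
    have "col (Hbar Mt h L L' n ns l') j = h l"
      unfolding Hbar_def Ls_def[symmetric] xs_def[symmetric] using j hl by simp
    moreover have "j < dim_col (Hbar Mt h L L' n ns l')"
      unfolding Hbar_def Ls_def[symmetric] xs_def[symmetric] using j by simp
    ultimately have "h l \<in> colspace (Hbar Mt h L L' n ns l')" by (metis col_in_colspace)
    then have "p \<bullet>c h l = 0" using p unfolding orth_compl_def by auto
    then have "(\<Sum>i\<in>{0..<Mt}. p $ i * cnj (h l $ i)) = 0"
      using hl unfolding scalar_prod_def by simp
    then show ?thesis by (simp add: mult.commute)
  qed
  have gi: "g $ i = (1 / complex_of_real \<sigma>) * (\<Sum>l\<in>Lb. h l $ i * X (\<phi> l))" if i: "i < Mt" for i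
    unfolding g_def gkl_def X_def[symmetric] using i gtap_sum[OF inj i, where X=X and ns=ns and h=h and L'=L' and l'=l']
    by (simp add: Lb_def \<phi>_def)
  have ei: "cnj c * e $ i = g $ i + (1 / complex_of_real \<sigma>) * (\<Sum>l\<in>Ls. h l $ i * X (\<phi> l))"
    if i: "i < Mt" for i
  proof -
    have "cnj c * e $ i = (1 / complex_of_real \<sigma>) * (\<Sum>l=1..L. h l $ i * X (\<phi> l))"
    proof -
      have cc: "cnj c = X (kappa L L' n l')" unfolding c_def X_def cnj_exp_neg ..
      have Xadd: "X a * X b = X (a + b)" for a b unfolding X_def by (rule exp_combine)
      have e_i: "e $ i = (1 / complex_of_real \<sigma>) * (\<Sum>l=1..L. h l $ i * X (int (n l) - n_max L n + ns))"
        unfolding e_def ek_def X_def[symmetric] using i by simp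
      have "cnj c * e $ i = (1 / complex_of_real \<sigma>) * (\<Sum>l=1..L. h l $ i * (X (kappa L L' n l') * X (int (n l) - n_max L n + ns)))"
        unfolding e_i cc by (simp add: sum_distrib_left mult_ac)
      also have "\<dots> = (1 / complex_of_real \<sigma>) * (\<Sum>l=1..L. h l $ i * X (\<phi> l))"
        unfolding Xadd \<phi>_def by (intro arg_cong[where f="\<lambda>x. _ * x"] sum.cong refl) (simp add: algebra_simps)
      finally show ?thesis .
    qed
    also have "\<dots> = (1 / complex_of_real \<sigma>) * (\<Sum>l\<in>Lb. h l $ i * X (\<phi> l))
        + (1 / complex_of_real \<sigma>) * (\<Sum>l\<in>Ls. h l $ i * X (\<phi> l))"
      unfolding split(1) by (simp add: sum.union_disjoint[OF finLb finLs split(2)] distrib_left)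
    finally show ?thesis using gi[OF i] by simp
  qed
  have gc: "g \<in> carrier_vec Mt" "e \<in> carrier_vec Mt" unfolding g_def gkl_def e_def ek_def by auto
  have ce: "conjugate e \<bullet> p = (\<Sum>i\<in>{0..<Mt}. cnj (e $ i) * p $ i)"
    using pc gc unfolding scalar_prod_def by simp
  have "c * (conjugate e \<bullet> p) = (\<Sum>i\<in>{0..<Mt}. cnj (cnj c * e $ i) * p $ i)"
    unfolding ce by (simp add: sum_distrib_left mult.assoc)
  also have "\<dots> = (\<Sum>i\<in>{0..<Mt}. cnj (g $ i) * p $ i)
     + (\<Sum>i\<in>{0..<Mt}. cnj ((1 / complex_of_real \<sigma>) * (\<Sum>l\<in>Ls. h l $ i * X (\<phi> l))) * p $ i)"
    unfolding sum.distrib[symmetric] by (intro sum.cong refl) (simp add: ei distrib_right)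
  also have "(\<Sum>i\<in>{0..<Mt}. cnj ((1 / complex_of_real \<sigma>) * (\<Sum>l\<in>Ls. h l $ i * X (\<phi> l))) * p $ i) = 0"
    by (rule orth_sum_zero[OF finLs orth])
  also have "(\<Sum>i\<in>{0..<Mt}. cnj (g $ i) * p $ i) = conjugate g \<bullet> p"
    using pc gc unfolding scalar_prod_def by simp
  finally have "conjugate g \<bullet> p = c * (conjugate e \<bullet> p)" by simp
  then show ?thesis unfolding g_def e_def c_def .
qed


lemma block_eq:
  assumes hc: "\<And>l. l \<in> {1..L} \<Longrightarrow> h l \<in> carrier_vec Mt" and inj: "inj_on n {1..L}"
    and onb: "onb_matrix Mt P (orth_compl Mt (colspace (Hbar Mt h L L' n ns l')))"
  shows "mat_adjoint (mat_of_cols Mt [gkl Mt h L L' n \<sigma> ns K k l']) * P =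
    mat_adjoint (mat_of_cols Mt [ek Mt h L n \<sigma> ns K k]) *
    (exp (- \<i> * of_real (2 * pi / real K) * of_nat k * of_int (kappa L L' n l')) \<cdot>\<^sub>m P)"
proof -
  define c where "c = exp (- \<i> * of_real (2 * pi / real K) * of_nat k * of_int (kappa L L' n l'))"
  define g where "g = gkl Mt h L L' n \<sigma> ns K k l'"
  define e where "e = ek Mt h L n \<sigma> ns K k"
  have P: "P \<in> carrier_mat Mt (dim_col P)" and cs: "colspace P = orth_compl Mt (colspace (Hbar Mt h L L' n ns l'))"
    using onb unfolding onb_matrix_def by blast+
  have gc: "g \<in> carrier_vec Mt" "e \<in> carrier_vec Mt" unfolding g_def gkl_def e_def ek_def by auto
  have "mat_of_rows Mt [conjugate g] * P = mat_of_rows Mt [conjugate e] * (c \<cdot>\<^sub>m P)"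
  proof (rule eq_matI)
    fix i j assume i: "i < dim_row (mat_of_rows Mt [conjugate e] * (c \<cdot>\<^sub>m P))"
      and j: "j < dim_col (mat_of_rows Mt [conjugate e] * (c \<cdot>\<^sub>m P))"
    from i have i0: "i = 0" by simp
    from j have j: "j < dim_col P" by simp
    have p: "col P j \<in> orth_compl Mt (colspace (Hbar Mt h L L' n ns l'))"
      using col_in_colspace[OF j] unfolding cs .
    have dr: "dim_row P = Mt" using P by (rule carrier_matD)
    have pc: "col P j \<in> carrier_vec Mt" using col_dim[of P j] unfolding dr .
    have r1: "row (mat_of_rows Mt [conjugate g]) 0 = conjugate g"
      using mat_of_rows_row[of 0 "[conjugate g]" Mt] gc by simp
    have r2: "row (mat_of_rows Mt [conjugate e]) 0 = conjugate e"
      using mat_of_rows_row[of 0 "[conjugate e]" Mt] gc by simp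
    have "(mat_of_rows Mt [conjugate g] * P) $$ (i, j) = conjugate g \<bullet> col P j"
      using i0 j r1 by simp
    also have "\<dots> = c * (conjugate e \<bullet> col P j)"
      unfolding g_def e_def c_def by (rule key_scalar[OF hc inj p])
    also have "\<dots> = conjugate e \<bullet> (c \<cdot>\<^sub>v col P j)"
    proof -
      have "dim_vec (conjugate e) = dim_vec (col P j)" using pc gc dr by simp
      then show ?thesis by (rule scalar_prod_smult_right[symmetric])
    qed
    also have "\<dots> = (mat_of_rows Mt [conjugate e] * (c \<cdot>\<^sub>m P)) $$ (i, j)"
      using i0 j r2 by simp
    finally show "(mat_of_rows Mt [conjugate g] * P) $$ (i, j) = (mat_of_rows Mt [conjugate e] * (c \<cdot>\<^sub>m P)) $$ (i, j)" .
  next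
    show "dim_row (mat_of_rows Mt [conjugate g] * P) = dim_row (mat_of_rows Mt [conjugate e] * (c \<cdot>\<^sub>m P))" by simp
    show "dim_col (mat_of_rows Mt [conjugate g] * P) = dim_col (mat_of_rows Mt [conjugate e] * (c \<cdot>\<^sub>m P))" by simp
  qed
  then have "mat_adjoint (mat_of_cols Mt [g]) * P = mat_adjoint (mat_of_cols Mt [e]) * (c \<cdot>\<^sub>m P)"
    unfolding adj_single[OF gc(1)] adj_single[OF gc(2)] .
  then show ?thesis unfolding g_def e_def c_def .
qed


theorem theorem2:
  fixes Mt L L' K :: nat and h :: "nat \<Rightarrow> complex vec" and n :: "nat \<Rightarrow> nat"
    and \<sigma> :: real and ns :: int and Hp :: "nat \<Rightarrow> complex mat"
  assumes "Mt > 0" "L > 0" "K > 0" "1 \<le> L'" "L' \<le> L"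
    and "\<And>l. l \<in> {1..L} \<Longrightarrow> h l \<in> carrier_vec Mt"
    and "inj_on n {1..L}"
    and "\<sigma> > 0"
    and "0 \<le> ns" "ns < n_span L n"
    and "\<And>l'. l' \<in> {1..L'} \<Longrightarrow>
           onb_matrix Mt (Hp l') (orth_compl Mt (colspace (Hbar Mt h L L' n ns l')))"
    and "k < K"
  shows "gk Mt h L L' n \<sigma> ns K Hp k = Vk Mt L L' n K Hp k *\<^sub>v ek Mt h L n \<sigma> ns K k"
proof -
  note hc = assms(6) and inj = assms(7) and onb = assms(11)
  define xs where "xs = [1..<L'+1]"
  have xs: "l' \<in> set xs \<Longrightarrow> l' \<in> {1..L'}" for l' unfolding xs_def by auto
  define E where "E = ek Mt h L n \<sigma> ns K k"
  have ec: "E \<in> carrier_vec Mt" unfolding E_def ek_def by auto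
  define cf where "cf l' = exp (- \<i> * of_real (2 * pi / real K) * of_nat k * of_int (kappa L L' n l'))" for l'
  have V: "Vk Mt L L' n K Hp k = mat_adjoint (hcat Mt (map (\<lambda>l'. cf l' \<cdot>\<^sub>m Hp l') xs))"
    unfolding Vk_def cf_def xs_def ..
  have Bs: "B \<in> carrier_mat Mt (dim_col B)" if B: "B \<in> set (map (\<lambda>l'. cf l' \<cdot>\<^sub>m Hp l') xs)" for B
  proof -
    obtain l' where l': "l' \<in> set xs" "B = cf l' \<cdot>\<^sub>m Hp l'" using B by auto
    have "Hp l' \<in> carrier_mat Mt (dim_col (Hp l'))" using onb[OF xs[OF l'(1)]] unfolding onb_matrix_def by blast
    then have "dim_row (Hp l') = Mt" by (rule carrier_matD)
    then show ?thesis unfolding l'(2) by (intro carrier_matI) simp_all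
  qed
  have "Vk Mt L L' n K Hp k *\<^sub>v E =
     col (mat_adjoint (hcat 1 (map (\<lambda>B. mat_adjoint (mat_of_cols Mt [E]) * B) (map (\<lambda>l'. cf l' \<cdot>\<^sub>m Hp l') xs)))) 0"
    unfolding V by (rule adj_hcat_mult[OF Bs ec])
  also have "map (\<lambda>B. mat_adjoint (mat_of_cols Mt [E]) * B) (map (\<lambda>l'. cf l' \<cdot>\<^sub>m Hp l') xs)
      = map (\<lambda>l'. mat_adjoint (mat_of_cols Mt [gkl Mt h L L' n \<sigma> ns K k l']) * Hp l') xs"
    unfolding map_map o_def
  proof (rule map_cong[OF refl])
    fix l' assume "l' \<in> set xs"
    then have l'': "l' \<in> {1..L'}" by (rule xs)
    have bb: "mat_adjoint (mat_of_cols Mt [gkl Mt h L L' n \<sigma> ns K k l']) * Hp l' =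
      mat_adjoint (mat_of_cols Mt [ek Mt h L n \<sigma> ns K k]) *
      (exp (- \<i> * of_real (2 * pi / real K) * of_nat k * of_int (kappa L L' n l')) \<cdot>\<^sub>m Hp l')"
      by (rule block_eq[OF hc inj onb[OF l'']])
    show "mat_adjoint (mat_of_cols Mt [E]) * (cf l' \<cdot>\<^sub>m Hp l') =
       mat_adjoint (mat_of_cols Mt [gkl Mt h L L' n \<sigma> ns K k l']) * Hp l'"
      unfolding E_def cf_def using bb by (rule sym)
  qed
  finally show ?thesis unfolding gk_def E_def xs_def by simp
qed

end
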